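(* Let $n\geq2$. For $\sigma>0$ let $u_\sigma:[0,\infty)\to\mathbb{R}^+$ denote the unique smooth solution of $$u''(x)=\Big[\frac{xu'(x)-u(x)}{2}+\frac{n-1}{u(x)}\Big]\big(1+(u'(x))^2\big)$$ that is asymptotic to the ray $x\mapsto\sigma x$ as $x\to+\infty$. Then for all sufficiently large $\sigma>0$, $u_\sigma$ has positive slope ($u_\sigma'>0$) on $[0,\infty)$.
   Context: For each $\sigma>0$ such a solution $u_\sigma$ exists and is unique; it satisfies $u_\sigma(x)>\sigma x$ and $|u_\sigma(x)-\sigma x|=O(1/x)$ as $x\to\infty$. *)

theory Defs
  imports "HOL-Analysis.Analysis"
begin

definition shrinker_soln :: "nat \<Rightarrow> real \<Rightarrow> (real \<Rightarrow> real) \<Rightarrow> (real \<Rightarrow> real) \<Rightarrow> (real \<Rightarrow> real) \<Rightarrow> bool" where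
  "shrinker_soln n \<sigma> u u' u'' \<longleftrightarrow>
     (\<forall>x\<ge>0. u x > 0
        \<and> (u has_real_derivative u' x) (at x within {0..})
        \<and> (u' has_real_derivative u'' x) (at x within {0..})
        \<and> u'' x = ((x * u' x - u x) / 2 + (real n - 1) / u x) * (1 + (u' x)\<^sup>2))
     \<and> ((\<lambda>x. u x - \<sigma> * x) \<longlongrightarrow> 0) at_top"

end

theory Submission
  imports Defs
begin

lemma persist:
  fixes f f' :: "real \<Rightarrow> real"
  assumes ab: "a < b" and fa: "f a < 0" and cont: "continuous_on {a..b} f"
    and der: "\<And>x. a < x \<Longrightarrow> x \<le> b \<Longrightarrow> f x = 0 \<Longrightarrow> (f has_real_derivative f' x) (at x) \<and> f' x < 0"
  shows "f b < 0"
proof (rule ccontr)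
  assume "\<not> f b < 0"
  hence fb: "f b \<ge> 0" by simp
  define T where "T = {a..b} \<inter> f -` {0..}"
  have cT: "closed T" unfolding T_def by (rule continuous_closed_preimage[OF cont]) auto
  have bT: "b \<in> T" using fb ab by (auto simp: T_def)
  have bd: "bdd_below T" unfolding T_def by (rule bdd_belowI[of _ a]) auto
  define q where "q = Inf T"
  have qT: "q \<in> T" unfolding q_def using closed_contains_Inf[OF _ bd cT] bT by auto
  have fq: "f q \<ge> 0" "a \<le> q" "q \<le> b" using qT by (auto simp: T_def)
  have qa: "q > a" using fq fa by (cases "q = a") auto
  have neg: "f x < 0" if "a \<le> x" "x < q" for x
  proof (rule ccontr)
    assume "\<not> f x < 0"
    hence "x \<in> T" using that fq by (auto simp: T_def)
    hence "q \<le> x" unfolding q_def using bd by (rule cInf_lower)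
    thus False using that by simp
  qed
  have "continuous_on {a..q} f" using fq by (intro continuous_on_subset[OF cont]) auto
  then obtain y where y: "a \<le> y" "y \<le> q" "f y = 0" using IVT'[of f a 0 q] fa fq qa by auto
  have yq: "y = q" using neg[of y] y by force
  have fq0: "f q = 0" using y yq by simp
  obtain D: "(f has_real_derivative f' q) (at q)" "f' q < 0" using der[OF qa fq(3) fq0] by blast
  obtain d where d: "d > 0" "\<forall>h>0. h < d \<longrightarrow> f q < f (q - h)" using DERIV_neg_dec_left[OF D] by blast
  define h where "h = min (d/2) ((q-a)/2)"
  have h1: "h \<le> (q-a)/2" using d qa unfolding h_def by linarith
  have h2: "h > 0" "h < d" using d qa by (auto simp: h_def)
  have "f q < f (q - h)" using d h2 by blast
  moreover have "f (q - h) < 0" using h1 h2 qa by (intro neg) auto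
  ultimately show False using fq0 by simp
qed


lemma persist2:
  fixes f f' :: "real \<Rightarrow> real"
  assumes ab: "a < b" and fa: "f a \<le> 0" and cont: "continuous_on {a..b} f"
    and der: "\<And>x. a \<le> x \<Longrightarrow> x \<le> b \<Longrightarrow> f x = 0 \<Longrightarrow> (f has_real_derivative f' x) (at x) \<and> f' x < 0"
  shows "f b < 0"
proof (cases "f a < 0")
  case True
  show ?thesis by (rule persist[OF ab True cont, of f']) (use der in auto)
next
  case False
  hence fa0: "f a = 0" using fa by simp
  obtain D: "(f has_real_derivative f' a) (at a)" "f' a < 0" using der[of a] ab fa0 by auto
  obtain d where d: "d > 0" "\<forall>h>0. h < d \<longrightarrow> f (a + h) < f a" using DERIV_neg_dec_right[OF D] by blast
  define h where "h = min (d/2) ((b-a)/2)"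
  have h1: "h \<le> (b-a)/2" using d ab unfolding h_def by linarith
  have h2: "h > 0" "h < d" using d ab by (auto simp: h_def)
  have fah: "f (a + h) < 0" using d h2 fa0 by auto
  show ?thesis
  proof (rule persist[where f=f and f'=f' and a="a+h" and b=b])
    show "a + h < b" using h1 h2(1) ab by (simp add: field_simps)
    show "continuous_on {a + h..b} f" using h2 by (intro continuous_on_subset[OF cont]) auto
  qed (use der h2 fah in \<open>auto intro!: der\<close>)
qed

context
  fixes n :: nat and \<sigma> :: real and u u' u'' :: "real \<Rightarrow> real"
  assumes n2: "n \<ge> 2" and sol: "shrinker_soln n \<sigma> u u' u''"
begin

lemma pos: "x \<ge> 0 \<Longrightarrow> u x > 0"
  using sol unfolding shrinker_soln_def by auto

lemma ode: "x \<ge> 0 \<Longrightarrow> u'' x = ((x * u' x - u x) / 2 + (real n - 1) / u x) * (1 + (u' x)\<^sup>2)"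
  using sol unfolding shrinker_soln_def by auto

lemma lim: "((\<lambda>x. u x - \<sigma> * x) \<longlongrightarrow> 0) at_top"
  using sol unfolding shrinker_soln_def by auto

lemma derw: "x \<ge> 0 \<Longrightarrow> (u has_real_derivative u' x) (at x within {0..}) \<and> (u' has_real_derivative u'' x) (at x within {0..})"
  using sol unfolding shrinker_soln_def by auto

lemma dera: assumes "x > 0" shows "(u has_real_derivative u' x) (at x)" "(u' has_real_derivative u'' x) (at x)"
proof -
  have e: "at x within {0<..} = at x" using assms by (intro at_within_open) auto
  have "x \<ge> 0" using assms by simp
  note d = derw[OF this]
  have sub: "{0<..} \<subseteq> {0::real..}" by auto
  show "(u has_real_derivative u' x) (at x)" using DERIV_subset[OF conjunct1[OF d] sub] unfolding e .
  show "(u' has_real_derivative u'' x) (at x)" using DERIV_subset[OF conjunct2[OF d] sub] unfolding e .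
qed

lemma contu: "continuous_on {0..} u"
  by (rule DERIV_continuous_on[of _ _ u']) (use derw in auto)

lemma contu': "continuous_on {0..} u'"
  by (rule DERIV_continuous_on[of _ _ u'']) (use derw in auto)

lemma contu_sub: "A \<subseteq> {0..} \<Longrightarrow> continuous_on A u" using contu continuous_on_subset by blast
lemma contu'_sub: "A \<subseteq> {0..} \<Longrightarrow> continuous_on A u'" using contu' continuous_on_subset by blast

lemma derw_w: assumes "x > 0"
  shows "((\<lambda>x. x * u' x - u x) has_real_derivative (x * u'' x)) (at x)"
  using dera[OF assms] by (auto intro!: derivative_eq_intros)


lemma w_nonpos: assumes x0: "x0 \<ge> 0" shows "x0 * u' x0 - u x0 \<le> 0"
proof (rule ccontr)
  define w where "w = (\<lambda>x. x * u' x - u x)"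
  assume "\<not> x0 * u' x0 - u x0 \<le> 0"
  hence wx0: "w x0 > 0" by (simp add: w_def)
  have x0p: "x0 > 0"
  proof (rule ccontr)
    assume "\<not> x0 > 0" hence "x0 = 0" using x0 by simp
    thus False using wx0 pos[of 0] by (simp add: w_def)
  qed
  have F: "u'' x = (w x / 2 + (real n - 1) / u x) * (1 + (u' x)\<^sup>2)" if "x \<ge> 0" for x
    using ode[OF that] by (simp add: w_def)
  have cpos: "(real n - 1) / u x > 0" if "x \<ge> 0" for x using pos[OF that] n2 by simp
  have dw: "(w has_real_derivative (x * u'' x)) (at x)" if "x > 0" for x
    unfolding w_def by (rule derw_w[OF that])
  have cw: "continuous_on A w" if "A \<subseteq> {0..}" for A
    unfolding w_def using contu_sub[OF that] contu'_sub[OF that] by (intro continuous_intros)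
  have wpos: "w b > 0" if "b \<ge> x0" for b
  proof (cases "b = x0")
    case True thus ?thesis using wx0 by simp
  next
    case False
    hence "x0 < b" using that by simp
    have "(\<lambda>x. - w x) b < 0"
    proof (rule persist[where f="\<lambda>x. - w x" and a=x0 and b=b and f'="\<lambda>x. - (x * u'' x)"])
      show "x0 < b" by fact
      show "- w x0 < 0" using wx0 by simp
      show "continuous_on {x0..b} (\<lambda>x. - w x)" using cw[of "{x0..b}"] x0 by (intro continuous_intros) auto
    next
      fix x assume x: "x0 < x" "x \<le> b" "- w x = 0"
      have "x > 0" using x x0p by simp
      have "(real n - 1) / u x * (1 + (u' x)\<^sup>2) > 0" using cpos[of x] \<open>x > 0\<close>
        by (intro mult_pos_pos) (auto simp: add_pos_nonneg)
      hence "u'' x > 0" using F[of x] x \<open>x > 0\<close> by simp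
      thus "((\<lambda>x. - w x) has_real_derivative - (x * u'' x)) (at x) \<and> - (x * u'' x) < 0"
        using dw[OF \<open>x > 0\<close>] \<open>x > 0\<close> by (auto intro!: derivative_eq_intros)
    qed
    thus ?thesis by simp
  qed
  have u''ge: "u'' x \<ge> w x / 2" if "x \<ge> x0" for x
  proof -
    have "x \<ge> 0" using that x0 by simp
    have A: "w x / 2 + (real n - 1) / u x \<ge> 0" using wpos[OF that] cpos[OF \<open>x \<ge> 0\<close>] by simp
    have "(w x / 2 + (real n - 1) / u x) * (1 + (u' x)\<^sup>2) \<ge> (w x / 2 + (real n - 1) / u x) * 1"
      by (rule mult_left_mono) (use A in auto)
    hence "w x / 2 + (real n - 1) / u x \<le> u'' x" using F[OF \<open>x \<ge> 0\<close>] by simp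
    thus ?thesis using cpos[OF \<open>x \<ge> 0\<close>] by linarith
  qed
  define \<delta> where "\<delta> = w x0"
  have wmono: "w x \<ge> \<delta>" if "x \<ge> x0" for x
    unfolding \<delta>_def
  proof (rule DERIV_nonneg_imp_increasing_open[OF that])
    fix y assume y: "x0 < y" "y < x"
    have "u'' y \<ge> 0" using u''ge[of y] wpos[of y] y by simp
    thus "\<exists>d. (w has_real_derivative d) (at y) \<and> 0 \<le> d" using dw[of y] y x0p by auto
  qed (use cw x0 in auto)
  define D where "D = \<delta> * x0^2 / 4"
  have wq: "w x \<ge> \<delta> * x^2 / 4 - D" if "x \<ge> x0" for x
  proof -
    have "(\<lambda>x. w x - \<delta> * x^2 / 4) x0 \<le> (\<lambda>x. w x - \<delta> * x^2 / 4) x"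
    proof (rule DERIV_nonneg_imp_increasing_open[OF that])
      fix y assume y: "x0 < y" "y < x"
      have "u'' y \<ge> \<delta> / 2" using u''ge[of y] wmono[of y] y by simp
      hence "y * u'' y \<ge> y * (\<delta>/2)" using y x0p by (intro mult_left_mono) auto
      hence "y * u'' y - \<delta> * (2 * y) / 4 \<ge> 0" by (simp add: algebra_simps)
      moreover have "((\<lambda>x. w x - \<delta> * x^2 / 4) has_real_derivative (y * u'' y - \<delta> * (2 * y) / 4)) (at y)"
        using dw[of y] y x0p by (auto intro!: derivative_eq_intros)
      ultimately show "\<exists>d. ((\<lambda>x. w x - \<delta> * x^2 / 4) has_real_derivative d) (at y) \<and> 0 \<le> d" by blast
    qed (use cw x0 in \<open>auto intro!: continuous_intros\<close>)
    thus ?thesis using wx0 by (simp add: D_def \<delta>_def)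
  qed
  define p where "p = (\<lambda>x. u x / x - \<delta> * x / 4 - D / x)"
  have pmono: "p x \<ge> p x0" if "x \<ge> x0" for x
  proof (rule DERIV_nonneg_imp_increasing_open[OF that])
    fix y assume y: "x0 < y" "y < x"
    have yp: "y > 0" using y x0p by simp
    have der: "(p has_real_derivative ((w y + D) / y^2 - \<delta> / 4)) (at y)"
      unfolding p_def w_def using dera[OF yp] yp
      by (auto intro!: derivative_eq_intros simp: field_simps power2_eq_square)
    have "w y + D \<ge> \<delta> * y^2 / 4" using wq[of y] y by simp
    hence "(w y + D) / y^2 \<ge> (\<delta> * y^2 / 4) / y^2" using yp by (intro divide_right_mono) auto
    also have "(\<delta> * y^2 / 4) / y^2 = \<delta> / 4" using yp by (simp add: field_simps)
    finally show "\<exists>d. (p has_real_derivative d) (at y) \<and> 0 \<le> d" using der by auto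
  next
    show "continuous_on {x0..x} p" unfolding p_def using contu_sub[of "{x0..x}"] x0p
      by (intro continuous_intros) auto
  qed
  have Dnn: "D \<ge> 0" using wx0 by (simp add: D_def \<delta>_def)
  have lower: "u x / x \<ge> p x0 + \<delta> * x / 4" if "x \<ge> x0" for x
  proof -
    have "D / x \<ge> 0" using Dnn that x0p by simp
    thus ?thesis using pmono[OF that] unfolding p_def by simp
  qed
  have "eventually (\<lambda>x. u x - \<sigma> * x < 1) at_top" using order_tendstoD(2)[OF lim] by simp
  then obtain N where N: "\<And>x. x \<ge> N \<Longrightarrow> u x - \<sigma> * x < 1" by (auto simp: eventually_at_top_linorder)
  define x where "x = max (max x0 1) (max N (4 * (\<bar>\<sigma>\<bar> + 1 + \<bar>p x0\<bar>) / \<delta>))"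
  have x1: "x \<ge> x0" "x \<ge> 1" "x \<ge> N" "x \<ge> 4 * (\<bar>\<sigma>\<bar> + 1 + \<bar>p x0\<bar>) / \<delta>" by (auto simp: x_def)
  have dp: "\<delta> > 0" using wx0 by (simp add: \<delta>_def)
  have "\<delta> * x / 4 \<ge> \<bar>\<sigma>\<bar> + 1 + \<bar>p x0\<bar>" using x1(4) dp by (simp add: field_simps)
  hence "u x / x \<ge> \<sigma> + 1" using lower[OF x1(1)] by linarith
  hence "u x \<ge> (\<sigma> + 1) * x" using x1(2) by (simp add: field_simps)
  moreover have "u x < \<sigma> * x + 1" using N[OF x1(3)] by simp
  ultimately show False using x1(2) by (simp add: algebra_simps)
qed

lemma u_ge: assumes x: "x \<ge> 0" shows "u x \<ge> \<sigma> * x"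
proof (rule ccontr)
  assume "\<not> u x \<ge> \<sigma> * x"
  hence ux: "u x < \<sigma> * x" by simp
  have xp: "x > 0" using ux pos[of 0] x by (cases "x = 0") auto
  define \<epsilon> where "\<epsilon> = \<sigma> - u x / x"
  have ep: "\<epsilon> > 0" using ux xp by (simp add: \<epsilon>_def field_simps)
  have dec: "u y / y \<le> u x / x" if "y \<ge> x" for y
  proof (rule DERIV_nonpos_imp_decreasing_open[OF that])
    fix z assume z: "x < z" "z < y"
    have zp: "z > 0" using z xp by simp
    have der: "((\<lambda>x. u x / x) has_real_derivative ((z * u' z - u z) / z^2)) (at z)"
      using dera[OF zp] zp by (auto intro!: derivative_eq_intros simp: field_simps power2_eq_square)
    have "(z * u' z - u z) / z^2 \<le> 0" using w_nonpos[of z] zp by (simp add: divide_nonpos_pos)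
    thus "\<exists>d. ((\<lambda>x. u x / x) has_real_derivative d) (at z) \<and> d \<le> 0" using der by blast
  qed (use contu_sub[of "{x..y}"] xp in \<open>auto intro!: continuous_intros\<close>)
  have "eventually (\<lambda>y. u y - \<sigma> * y > - (\<epsilon> * x)) at_top"
    using order_tendstoD(1)[OF lim] ep xp by simp
  then obtain N where N: "\<And>y. y \<ge> N \<Longrightarrow> u y - \<sigma> * y > - (\<epsilon> * x)" by (auto simp: eventually_at_top_linorder)
  define y where "y = max x N"
  have y: "y \<ge> x" "y \<ge> N" by (auto simp: y_def)
  have yp: "y > 0" using y xp by simp
  have "u y / y \<le> \<sigma> - \<epsilon>" using dec[OF y(1)] by (simp add: \<epsilon>_def)
  hence "u y \<le> (\<sigma> - \<epsilon>) * y" using yp by (simp add: field_simps)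
  hence "u y - \<sigma> * y \<le> - (\<epsilon> * y)" by (simp add: algebra_simps)
  also have "- (\<epsilon> * y) \<le> - (\<epsilon> * x)" using y ep by simp
  finally show False using N[OF y(2)] by simp
qed


lemma eventually_pos: assumes sp: "\<sigma> > 0" and x2: "x2 \<ge> 0" and big: "\<sigma> * x2 > 2 * real n"
  shows "u' x2 > 0"
proof (rule ccontr)
  assume "\<not> u' x2 > 0"
  hence u0: "u' x2 \<le> 0" by simp
  have x2p: "x2 > 0" using big n2 sp x2 by (cases "x2 = 0") auto
  have neg: "u' b < 0" if "b > x2" for b
  proof (rule persist2[where f=u' and f'=u'' and a=x2 and b=b])
    show "x2 < b" by fact
    show "u' x2 \<le> 0" by fact
    show "continuous_on {x2..b} u'" using x2 by (intro contu'_sub) auto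
  next
    fix x assume x: "x2 \<le> x" "x \<le> b" "u' x = 0"
    have xp: "x > 0" using x x2p by simp
    have "u x \<ge> \<sigma> * x" using u_ge[of x] xp by simp
    moreover have "\<sigma> * x \<ge> \<sigma> * x2" using x sp by simp
    ultimately have ub: "u x > 2 * real n" using big by linarith
    have "(real n - 1) / u x < 1" using ub n2 by (simp add: divide_less_eq)
    moreover have "u x / 2 > 1" using ub n2 by simp
    ultimately have "- u x / 2 + (real n - 1) / u x < 0" by linarith
    hence "u'' x < 0" using ode[of x] xp x(3) by simp
    thus "(u' has_real_derivative u'' x) (at x) \<and> u'' x < 0" using dera[OF xp] by simp
  qed
  define B where "B = x2 + u x2 / \<sigma> + 1"
  have "u x2 / \<sigma> > 0" using pos[OF x2] sp by simp
  hence Bx: "B > x2" by (simp add: B_def)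
  have "u B \<le> u x2"
  proof (rule DERIV_nonpos_imp_decreasing_open[of x2 B u])
    show "x2 \<le> B" using Bx by simp
    fix z assume z: "x2 < z" "z < B"
    show "\<exists>d. (u has_real_derivative d) (at z) \<and> d \<le> 0" using dera(1)[of z] neg[of z] z x2p by force
  qed (use x2 in \<open>auto intro!: contu_sub\<close>)
  moreover have "u B \<ge> \<sigma> * B" using u_ge[of B] Bx x2 by simp
  moreover have "\<sigma> * B = \<sigma> * x2 + u x2 + \<sigma>" using sp by (simp add: B_def field_simps)
  ultimately show False using sp big n2 by linarith
qed

lemma main: assumes sb: "\<sigma> > 2 ^ n" and x1: "x1 \<ge> 0" shows "u' x1 > 0"
proof (rule ccontr)
  assume "\<not> u' x1 > 0"
  hence u1: "u' x1 \<le> 0" by simp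
  have sp: "\<sigma> > 0" using sb by (smt (verit) zero_less_power)
  define S where "S = {0..} \<inter> u' -` {..0}"
  have cS: "closed S" unfolding S_def by (rule continuous_closed_preimage[OF contu']) auto
  have x1S: "x1 \<in> S" using x1 u1 by (simp add: S_def)
  have bS: "bdd_above S"
  proof (rule bdd_aboveI[of _ "2 * real n / \<sigma>"])
    fix x assume "x \<in> S"
    hence x: "x \<ge> 0" "u' x \<le> 0" by (auto simp: S_def)
    have "\<not> \<sigma> * x > 2 * real n" using eventually_pos[OF sp x(1)] x(2) by force
    thus "x \<le> 2 * real n / \<sigma>" using sp by (simp add: field_simps)
  qed
  define c where "c = Sup S"
  have cS': "c \<in> S" unfolding c_def using closed_contains_Sup[OF _ bS cS] x1S by auto
  have c0: "c \<ge> 0" "u' c \<le> 0" using cS' by (auto simp: S_def)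
  have after: "u' x > 0" if "x > c" for x
  proof (rule ccontr)
    assume "\<not> u' x > 0"
    hence "x \<in> S" using that c0 by (auto simp: S_def)
    hence "x \<le> c" unfolding c_def using bS by (rule cSup_upper)
    thus False using that by simp
  qed
  have uc0: "u' c = 0"
  proof -
    obtain y where y: "c \<le> y" "y \<le> c + 1" "u' y = 0"
      using IVT'[of u' c 0 "c + 1"] c0 after[of "c+1"] contu'_sub[of "{c..c+1}"] by force
    have "y \<in> S" using y c0 by (auto simp: S_def)
    hence "y \<le> c" unfolding c_def using bS by (rule cSup_upper)
    thus ?thesis using y by simp
  qed
  define uc where "uc = u c"
  have ucp: "uc > 0" using pos[OF c0(1)] by (simp add: uc_def)
  define B where "B = c + 2 * uc / \<sigma>"
  have cB: "c \<le> B" using ucp sp by (simp add: B_def)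
  have "u B \<ge> \<sigma> * B" using u_ge[of B] cB c0 by simp
  moreover have "\<sigma> * B \<ge> 2 * uc" using sp c0 by (simp add: B_def field_simps)
  ultimately have "u c \<le> 2 * uc" "2 * uc \<le> u B" using ucp by (auto simp: uc_def)
  then obtain b where b: "c \<le> b" "b \<le> B" "u b = 2 * uc"
    using IVT'[of u c "2*uc" B] cB contu_sub[of "{c..B}"] c0 by force
  have bc: "b > c" using b ucp by (cases "b = c") (auto simp: uc_def)
  have u'nn: "u' x \<ge> 0" if "x \<ge> c" for x using after[of x] uc0 that by (cases "x = c") auto
  have umono: "u x \<le> u y" if "c \<le> x" "x \<le> y" for x y
  proof (rule DERIV_nonneg_imp_increasing_open[OF that(2)])
    fix z assume z: "x < z" "z < y"
    show "\<exists>d. (u has_real_derivative d) (at z) \<and> d \<ge> 0" using dera(1)[of z] u'nn[of z] z that c0 by force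
  qed (use that c0 in \<open>auto intro!: contu_sub\<close>)
  define K :: real where "K = 2 ^ (n - 1)"
  define L where "L = (\<lambda>x. ln (1 + (u' x)^2) - 2 * (real n - 1) * ln (u x))"
  have Lmono: "L x \<le> L c" if x: "c \<le> x" for x
  proof (rule DERIV_nonpos_imp_decreasing_open[OF x])
    fix z assume z: "c < z" "z < x"
    have zp: "z > 0" using z c0 by simp
    have up: "u z > 0" using pos zp by simp
    have q: "1 + (u' z)^2 > 0" by (simp add: add_pos_nonneg)
    have der: "(L has_real_derivative (2 * u' z * u'' z / (1 + (u' z)^2) - 2 * (real n - 1) * (u' z / u z))) (at z)"
      unfolding L_def using dera[OF zp] up q
      apply (auto intro!: derivative_eq_intros simp: power2_eq_square)
      apply (simp add: mult_ac)
      done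
    define F where "F = (z * u' z - u z) / 2 + (real n - 1) / u z"
    have e1: "u'' z / (1 + (u' z)^2) = F" using ode[of z] zp q by (simp add: F_def)
    have "2 * u' z * u'' z / (1 + (u' z)^2) = 2 * u' z * F" using e1 by (metis times_divide_eq_right)
    moreover have "2 * u' z * F - 2 * (real n - 1) * (u' z / u z) = u' z * (z * u' z - u z)"
      unfolding F_def using up by (simp add: field_simps)
    ultimately have "2 * u' z * u'' z / (1 + (u' z)^2) - 2 * (real n - 1) * (u' z / u z) = u' z * (z * u' z - u z)"
      by simp
    moreover have "u' z * (z * u' z - u z) \<le> 0" using u'nn[of z] w_nonpos[of z] z zp
      by (intro mult_nonneg_nonpos) auto
    ultimately show "\<exists>d. (L has_real_derivative d) (at z) \<and> d \<le> 0" using der by auto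
  next
    have "\<forall>y\<in>{c..x}. u y \<noteq> 0"
    proof
      fix y assume "y \<in> {c..x}"
      hence "y \<ge> 0" using c0 by simp
      thus "u y \<noteq> 0" using pos[of y] by simp
    qed
    moreover have "\<forall>y\<in>{c..x}. 1 + (u' y)^2 \<noteq> 0" by (intro ballI) (smt (verit) zero_le_power2)
    ultimately show "continuous_on {c..x} L" unfolding L_def
      using contu_sub[of "{c..x}"] contu'_sub[of "{c..x}"] c0
      by (auto intro!: continuous_intros)
  qed
  have slope: "u' x \<le> K" if x: "c \<le> x" "x \<le> b" for x
  proof -
    have ux: "u x > 0" "u x \<le> 2 * uc" using pos[of x] umono[OF x] x c0 b by auto
    have "L c = - 2 * (real n - 1) * ln uc" by (simp add: L_def uc0 uc_def algebra_simps)
    hence "ln (1 + (u' x)^2) \<le> 2 * (real n - 1) * (ln (u x) - ln uc)"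
      using Lmono[OF x(1)] by (simp add: L_def algebra_simps)
    also have "ln (u x) - ln uc \<le> ln 2"
    proof -
      have "ln (u x) \<le> ln (2 * uc)" using ux ucp by simp
      thus ?thesis using ucp by (simp add: ln_mult)
    qed
    hence "2 * (real n - 1) * (ln (u x) - ln uc) \<le> 2 * (real n - 1) * ln 2" using n2 by (intro mult_left_mono) auto
    also have "2 * (real n - 1) * ln 2 = ln (2 ^ (2 * (n - 1)))" using n2 by (simp add: ln_realpow of_nat_diff)
    finally have "1 + (u' x)^2 \<le> 2 ^ (2 * (n - 1))" by (simp add: add_pos_nonneg)
    hence "(u' x)^2 \<le> K^2" by (simp add: K_def power_mult[symmetric] mult.commute)
    thus ?thesis by (rule power2_le_imp_le) (simp add: K_def)
  qed
  have "K * c - u c \<le> K * b - u b"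
  proof (rule DERIV_nonneg_imp_increasing_open[of c b "\<lambda>x. K * x - u x", simplified])
    show "c \<le> b" using bc by simp
    fix z assume z: "c < z" "z < b"
    have zp: "z > 0" using z c0 by simp
    have "((\<lambda>x. K * x - u x) has_real_derivative (K - u' z)) (at z)"
      using dera[OF zp] by (auto intro!: derivative_eq_intros)
    thus "\<exists>y. ((\<lambda>x. K * x - u x) has_real_derivative y) (at z) \<and> 0 \<le> y" using slope[of z] z by force
  qed (use c0 in \<open>auto intro!: continuous_intros contu_sub\<close>)
  hence "uc \<le> K * (b - c)" using b by (simp add: uc_def algebra_simps)
  also have "\<dots> \<le> K * b" using c0 by (simp add: K_def)
  finally have ucK: "uc \<le> K * b" .
  have "\<sigma> * b \<le> 2 * uc" using u_ge[of b] b bc c0 by simp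
  have "\<sigma> * uc \<le> \<sigma> * (K * b)" using ucK sp by simp
  also have "\<dots> = K * (\<sigma> * b)" by simp
  also have "\<dots> \<le> K * (2 * uc)" using \<open>\<sigma> * b \<le> 2 * uc\<close> by (intro mult_left_mono) (auto simp: K_def)
  also have "\<dots> = 2 ^ n * uc"
  proof -
    obtain m where m: "n = Suc m" using n2 by (cases n) auto
    have "(2::real) ^ n = 2 * 2 ^ (n - 1)" by (simp add: m)
    thus ?thesis by (simp add: K_def)
  qed
  finally have "\<sigma> \<le> 2 ^ n" using ucp by simp
  thus False using sb by simp
qed

end


theorem lemma7:
  fixes n :: nat
  assumes "n \<ge> 2"
  shows "\<exists>\<Sigma>::real. \<forall>\<sigma>>\<Sigma>. \<forall>u u' u''. shrinker_soln n \<sigma> u u' u'' \<longrightarrow> (\<forall>x\<ge>0. u' x > 0)"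
proof (intro exI[of _ "2 ^ n"] allI impI)
  fix \<sigma> :: real and u u' u'' :: "real \<Rightarrow> real" and x :: real
  assume "\<sigma> > 2 ^ n" "shrinker_soln n \<sigma> u u' u''" "x \<ge> 0"
  thus "u' x > 0" using main[OF assms] by blast
qed

end
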